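(* Let $S$ be a nonempty subset of $\mathbb{Z}$ and $\mathcal{T}\subseteq\mathbb{N}$. Then for every positive integer $n<|S|$, the generalized integer $[n]_{S,\mathcal{T}}:=\dfrac{n!_{S,\mathcal{T}}}{(n-1)!_{S,\mathcal{T}}}$ is a positive integer.
   Context: $\mathbb{N}=\{0,1,2,\dots\}$. For an integer $b\ge0$ and $a\in\mathbb{Z}$ define $\operatorname{ord}_b(a):=\sup\{k\in\mathbb{N}: a\mathbb{Z}\subseteq b^k\mathbb{Z}\}$ (convention $0^0=1$); thus for $b\ge2$ it is the largest $k$ with $b^k\mid a$ ($+\infty$ for $a=0$), $\operatorname{ord}_0(a)=+\infty$ if $a=0$ and $0$ otherwise, and $\operatorname{ord}_1(a)=+\infty$. For nonempty $S\subseteq\mathbb{Z}$, a $b$-ordering of $S$ is a sequence $(a_i)_{i\ge0}$ in $S$ such that for each $i\ge1$, $a_i$ attains $\min_{a'\in S}\sum_{j=0}^{i-1}\operatorname{ord}_b(a'-a_j)$; the $b$-exponent sequence is $\alpha_k(S,b):=\sum_{j=0}^{k-1}\operatorname{ord}_b(a_k-a_j)$ for any $b$-ordering (independent of the choice). For $\mathcal{T}\subseteq\mathbb{N}$ the generalized factorial is $k!_{S,\mathcal{T}}:=\prod_{b\in\mathcal{T}}b^{\alpha_k(S,b)}$, with conventions $b^{+\infty}=0$ for $b=0$ and $b\ge2$, $1^{+\infty}=1$, and $b^0=1$ for all $b\in\mathbb{N}$. *)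

theory Defs
  imports Main "HOL-Library.Extended_Nat"
begin

definition ordb :: "nat \<Rightarrow> int \<Rightarrow> enat" where
  "ordb b a = Sup (enat ` {k. (int b) ^ k dvd a})"

definition is_bordering :: "int set \<Rightarrow> nat \<Rightarrow> (nat \<Rightarrow> int) \<Rightarrow> bool" where
  "is_bordering S b a \<longleftrightarrow> (\<forall>i. a i \<in> S) \<and>
     (\<forall>i\<ge>1. \<forall>a'\<in>S. (\<Sum>j<i. ordb b (a i - a j)) \<le> (\<Sum>j<i. ordb b (a' - a j)))"

definition alpha :: "nat \<Rightarrow> int set \<Rightarrow> nat \<Rightarrow> enat" where
  "alpha k S b = (let a = (SOME a. is_bordering S b a) in (\<Sum>j<k. ordb b (a k - a j)))"

definition epow :: "nat \<Rightarrow> enat \<Rightarrow> nat" where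
  "epow b e = (case e of enat m \<Rightarrow> b ^ m | \<infinity> \<Rightarrow> (if b = 1 then 1 else 0))"

text \<open>Generalized factorial k!_{S,T} = product over b \<in> T of b^{alpha_k(S,b)}; the
  product is taken over the (finite) set of factors different from 1; if that set
  were infinite the product would be undefined and we set it to 0.\<close>
definition genfact :: "nat \<Rightarrow> int set \<Rightarrow> nat set \<Rightarrow> nat" where
  "genfact k S T = (let F = {b \<in> T. epow b (alpha k S b) \<noteq> 1} in
     if finite F then (\<Prod>b\<in>F. epow b (alpha k S b)) else 0)"

end

theory Submission
  imports Defs
begin

lemma ordb_ndvd: "\<not> int b dvd x \<Longrightarrow> ordb b x = 0"
proof -
  assume h: "\<not> int b dvd x"
  have "{k. (int b) ^ k dvd x} = {0}"
  proof safe
    fix k assume "int b ^ k dvd x"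
    then show "k = 0" using h
      by (metis dvd_power dvd_trans gr0I)
  qed simp
  then show ?thesis unfolding ordb_def by (simp add: zero_enat_def)
qed

lemma ordb_fin: assumes "b \<ge> 2" "x \<noteq> 0" shows "ordb b x \<noteq> \<infinity>"
proof -
  have "\<And>k. int b ^ k dvd x \<Longrightarrow> k \<le> nat \<bar>x\<bar>"
  proof -
    fix k assume "int b ^ k dvd x"
    then have "\<bar>int b ^ k\<bar> \<le> \<bar>x\<bar>" using assms(2) by (intro dvd_imp_le_int)
    then have "int b ^ k \<le> \<bar>x\<bar>" by simp
    moreover have "k < 2 ^ k" by (rule less_exp)
    then have "int k < 2 ^ k" by (metis of_nat_less_iff of_nat_power of_nat_numeral)
    moreover have "(2::int) ^ k \<le> int b ^ k" using assms(1) by (intro power_mono) auto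
    ultimately show "k \<le> nat \<bar>x\<bar>" by linarith
  qed
  then have "ordb b x \<le> enat (nat \<bar>x\<bar>)" unfolding ordb_def
    by (intro Sup_least) auto
  then show ?thesis by (auto dest: enat_ile)
qed

lemma sum_fin: "finite A \<Longrightarrow> (\<And>j. j \<in> A \<Longrightarrow> f j \<noteq> (\<infinity>::enat)) \<Longrightarrow> sum f A \<noteq> \<infinity>"
  by (induct A rule: finite_induct) (auto simp: plus_eq_infty_iff_enat)

definition nxt :: "int set \<Rightarrow> nat \<Rightarrow> int list \<Rightarrow> int" where
  "nxt S b xs = (SOME y. y \<in> S \<and> (\<forall>z\<in>S. (\<Sum>x\<leftarrow>xs. ordb b (y - x)) \<le> (\<Sum>x\<leftarrow>xs. ordb b (z - x))))"

fun lst :: "int set \<Rightarrow> nat \<Rightarrow> nat \<Rightarrow> int list" where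
  "lst S b 0 = []"
| "lst S b (Suc i) = lst S b i @ [nxt S b (lst S b i)]"

lemma ex_min: fixes f :: "int \<Rightarrow> enat" assumes "S \<noteq> {}"
  shows "\<exists>y. y \<in> S \<and> (\<forall>z\<in>S. f y \<le> f z)"
proof -
  obtain y0 where "y0 \<in> S" using assms by auto
  then have "\<exists>v. v \<in> f ` S" by auto
  then have "(LEAST v. v \<in> f ` S) \<in> f ` S" by (rule LeastI_ex)
  then obtain y where y: "y \<in> S" "f y = (LEAST v. v \<in> f ` S)" by auto
  have "\<forall>z\<in>S. f y \<le> f z" using y(2) by (auto intro: Least_le)
  with y show ?thesis by blast
qed

lemma nxt_prop: assumes "S \<noteq> {}"
  shows "nxt S b xs \<in> S \<and> (\<forall>z\<in>S. (\<Sum>x\<leftarrow>xs. ordb b (nxt S b xs - x)) \<le> (\<Sum>x\<leftarrow>xs. ordb b (z - x)))"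
  unfolding nxt_def
  by (rule someI_ex, rule ex_min[OF assms])

lemma lst_eq: "lst S b i = map (\<lambda>i. nxt S b (lst S b i)) [0..<i]"
proof (induct i)
  case (Suc i)
  have "length (lst S b i) = i" by (induct i) auto
  then have e: "lst S b i @ [nxt S b (lst S b i)] = map (\<lambda>i. nxt S b (lst S b i)) [0..<Suc i]"
    using Suc by simp
  then show ?case by simp
qed simp

lemma bordering_ex: assumes "S \<noteq> {}" shows "\<exists>a. is_bordering S b a"
proof -
  define a where "a = (\<lambda>i. nxt S b (lst S b i))"
  have L: "lst S b i = map a [0..<i]" for i unfolding a_def by (rule lst_eq)
  have "is_bordering S b a"
    unfolding is_bordering_def
  proof safe
    fix i show "a i \<in> S" unfolding a_def using nxt_prop[OF assms] by blast
  next
    fix i :: nat and z assume "z \<in> S"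
    have s: "(\<Sum>x\<leftarrow>lst S b i. ordb b (y - x)) = (\<Sum>j<i. ordb b (y - a j))" for y
      unfolding L by (simp add: interv_sum_list_conv_sum_set_nat atLeast0LessThan comp_def)
    have m: "(\<Sum>x\<leftarrow>lst S b i. ordb b (a i - x)) \<le> (\<Sum>x\<leftarrow>lst S b i. ordb b (z - x))"
      using nxt_prop[OF assms, of b "lst S b i"] \<open>z \<in> S\<close> unfolding a_def by blast
    then show "(\<Sum>j<i. ordb b (a i - a j)) \<le> (\<Sum>j<i. ordb b (z - a j))"
      unfolding s .
  qed
  then show ?thesis by blast
qed

definition bo :: "int set \<Rightarrow> nat \<Rightarrow> nat \<Rightarrow> int" where
  "bo S b = (SOME a. is_bordering S b a)"

lemma bo_ok: "S \<noteq> {} \<Longrightarrow> is_bordering S b (bo S b)"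
  unfolding bo_def using bordering_ex by (metis someI_ex)

lemma alpha_bo: "alpha k S b = (\<Sum>j<k. ordb b (bo S b k - bo S b j))"
  unfolding alpha_def bo_def Let_def by simp

lemma alpha_le: assumes "S \<noteq> {}" "z \<in> S"
  shows "alpha k S b \<le> (\<Sum>j<k. ordb b (z - bo S b j))"
proof (cases "k \<ge> 1")
  case True then show ?thesis using bo_ok[OF assms(1), of b] assms(2)
    unfolding alpha_bo is_bordering_def by blast
next
  case False then have "k = 0" by simp
  then show ?thesis by (simp add: alpha_bo)
qed

lemma alpha_mono: assumes "S \<noteq> {}" shows "alpha k S b \<le> alpha (Suc k) S b"
proof -
  have "alpha k S b \<le> (\<Sum>j<k. ordb b (bo S b (Suc k) - bo S b j))"
    using alpha_le[OF assms] bo_ok[OF assms, of b] unfolding is_bordering_def by blast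
  also have "\<dots> \<le> alpha (Suc k) S b" unfolding alpha_bo by simp
  finally show ?thesis .
qed

lemma new_elem: assumes "infinite S \<or> k < card S"
  shows "\<exists>z\<in>S. \<forall>j<k. z \<noteq> f j"
proof (rule ccontr)
  assume "\<not> ?thesis"
  then have sub: "S \<subseteq> f ` {..<k}" by auto
  then have fin: "finite S" using finite_subset by blast
  have "card S \<le> card (f ` {..<k})" using sub by (intro card_mono) auto
  also have "\<dots> \<le> k" using card_image_le[of "{..<k}" f] by simp
  finally show False using assms fin by simp
qed

lemma alpha_good: assumes "S \<noteq> {}" "infinite S \<or> k < card S"
  shows "alpha k S 0 = 0" and "b \<ge> 2 \<Longrightarrow> alpha k S b \<noteq> \<infinity>"
proof -
  obtain z where z: "z \<in> S" "\<forall>j<k. z \<noteq> bo S 0 j" using new_elem[OF assms(2)] by blast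
  have "alpha k S 0 \<le> (\<Sum>j<k. ordb 0 (z - bo S 0 j))" by (rule alpha_le[OF assms(1) z(1)])
  also have "\<dots> = 0" using z(2) by (intro sum.neutral) (auto intro!: ordb_ndvd)
  finally show "alpha k S 0 = 0" by simp
next
  assume b: "b \<ge> 2"
  obtain z where z: "z \<in> S" "\<forall>j<k. z \<noteq> bo S b j" using new_elem[OF assms(2)] by blast
  have "alpha k S b \<le> (\<Sum>j<k. ordb b (z - bo S b j))" by (rule alpha_le[OF assms(1) z(1)])
  moreover have "(\<Sum>j<k. ordb b (z - bo S b j)) \<noteq> \<infinity>"
    using z(2) by (intro sum_fin ordb_fin b) auto
  ultimately show "alpha k S b \<noteq> \<infinity>" by (auto dest: enat_ile)
qed

lemma epow_pos: assumes "S \<noteq> {}" "infinite S \<or> k < card S"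
  shows "epow b (alpha k S b) > 0"
proof -
  consider "b = 0" | "b = 1" | "b \<ge> 2" by linarith
  then show ?thesis
  proof cases
    case 1 then show ?thesis using alpha_good(1)[OF assms] by (simp add: epow_def zero_enat_def)
  next
    case 2 then show ?thesis by (simp add: epow_def split: enat.split)
  next
    case 3 then obtain m where "alpha k S b = enat m" using alpha_good(2)[OF assms 3] by auto
    then show ?thesis using 3 by (simp add: epow_def)
  qed
qed

lemma epow_dvd: assumes "S \<noteq> {}" "infinite S \<or> Suc k < card S"
  shows "epow b (alpha k S b) dvd epow b (alpha (Suc k) S b)"
proof -
  have a2: "infinite S \<or> k < card S" using assms(2) by auto
  consider "b = 0" | "b = 1" | "b \<ge> 2" by linarith
  then show ?thesis
  proof cases
    case 1 then show ?thesis using alpha_good(1)[OF assms] alpha_good(1)[OF assms(1) a2]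
      by (simp add: epow_def zero_enat_def)
  next
    case 2 then show ?thesis by (simp add: epow_def split: enat.split)
  next
    case 3 then obtain p where p: "alpha k S b = enat p" using alpha_good(2)[OF assms(1) a2 3] by auto
    obtain q where q: "alpha (Suc k) S b = enat q" using alpha_good(2)[OF assms 3] by auto
    have "p \<le> q" using alpha_mono[OF assms(1), of k b] p q by simp
    then show ?thesis using p q by (simp add: epow_def le_imp_power_dvd)
  qed
qed

lemma collide: assumes "S \<noteq> {}" "X \<subseteq> S" "finite X" "card X = Suc n" "b \<ge> 2"
  "alpha n S b \<noteq> 0"
  shows "\<exists>x\<in>X. \<exists>y\<in>X. x \<noteq> y \<and> int b dvd x - y"
proof (rule ccontr)
  assume nc: "\<not> ?thesis"
  have ex: "\<exists>j<n. int b dvd x - bo S b j" if "x \<in> X" for x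
  proof (rule ccontr)
    assume "\<not> ?thesis"
    then have "(\<Sum>j<n. ordb b (x - bo S b j)) = 0" by (intro sum.neutral) (auto intro: ordb_ndvd)
    moreover have "alpha n S b \<le> (\<Sum>j<n. ordb b (x - bo S b j))"
      using alpha_le[OF assms(1)] that assms(2) by blast
    ultimately show False using assms(6) by simp
  qed
  define g where "g x = (SOME j. j < n \<and> int b dvd x - bo S b j)" for x
  have g: "g x < n \<and> int b dvd x - bo S b (g x)" if "x \<in> X" for x
    unfolding g_def using someI_ex[OF ex[OF that]] .
  have "inj_on g X"
  proof (rule inj_onI)
    fix x y assume xy: "x \<in> X" "y \<in> X" "g x = g y"
    then have "int b dvd (x - bo S b (g x)) - (y - bo S b (g y))" using g by (metis dvd_diff)
    then have "int b dvd x - y" using xy(3) by simp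
    then show "x = y" using nc xy by blast
  qed
  then have "card X \<le> card {..<n}" using g by (intro card_inj_on_le) auto
  then show False using assms(4) by simp
qed

lemma fin_F: assumes "S \<noteq> {}" "infinite S \<or> n < card S"
  shows "finite {b. 2 \<le> b \<and> alpha n S b \<noteq> 0}"
proof -
  obtain X where X: "X \<subseteq> S" "finite X" "card X = Suc n"
  proof (cases "finite S")
    case True
    then have "Suc n \<le> card S" using assms(2) by auto
    then show ?thesis using that obtain_subset_with_card_n by (metis True finite_subset)
  next
    case False
    then show ?thesis using that infinite_arbitrarily_large by blast
  qed
  have "{b. 2 \<le> b \<and> alpha n S b \<noteq> 0} \<subseteq> (\<Union>x\<in>X. \<Union>y\<in>X. {..nat \<bar>x - y\<bar>})"
  proof
    fix b assume "b \<in> {b. 2 \<le> b \<and> alpha n S b \<noteq> 0}"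
    then obtain x y where xy: "x \<in> X" "y \<in> X" "x \<noteq> y" "int b dvd x - y"
      using collide[OF assms(1) X] by blast
    then have "int b \<le> \<bar>x - y\<bar>" using dvd_imp_le_int[of "x - y" "int b"] by simp
    then have "b \<le> nat \<bar>x - y\<bar>" by linarith
    then show "b \<in> (\<Union>x\<in>X. \<Union>y\<in>X. {..nat \<bar>x - y\<bar>})" using xy by blast
  qed
  moreover have "finite (\<Union>x\<in>X. \<Union>y\<in>X. {..nat \<bar>x - y\<bar>})" using X(2) by auto
  ultimately show ?thesis by (rule finite_subset)
qed

theorem theorem3p12:
  fixes S :: "int set" and T :: "nat set" and n :: nat
  assumes "S \<noteq> {}" and "n \<ge> 1" and "infinite S \<or> n < card S"
  shows "genfact (n - 1) S T > 0 \<and> genfact (n - 1) S T dvd genfact n S T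
         \<and> genfact n S T div genfact (n - 1) S T > 0"
proof -
  define m where "m = n - 1"
  have n: "n = Suc m" using assms(2) unfolding m_def by simp
  have c1: "infinite S \<or> m < card S" and c2: "infinite S \<or> Suc m < card S"
    using assms(3) n by auto
  define e where "e k b = epow b (alpha k S b)" for k b
  have pm: "e m b > 0" for b unfolding e_def by (rule epow_pos[OF assms(1) c1])
  have pn: "e (Suc m) b > 0" for b unfolding e_def by (rule epow_pos[OF assms(1) c2])
  have dv: "e m b dvd e (Suc m) b" for b unfolding e_def by (rule epow_dvd[OF assms(1) c2])
  define Fm where "Fm = {b \<in> T. e m b \<noteq> 1}"
  define Fn where "Fn = {b \<in> T. e (Suc m) b \<noteq> 1}"
  have "Fn \<subseteq> {b. 2 \<le> b \<and> alpha (Suc m) S b \<noteq> 0}"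
  proof
    fix b assume "b \<in> Fn"
    then have h: "epow b (alpha (Suc m) S b) \<noteq> 1" unfolding Fn_def e_def by auto
    have "b \<noteq> 0"
    proof
      assume "b = 0" then show False using h alpha_good(1)[OF assms(1) c2] by (simp add: epow_def zero_enat_def)
    qed
    moreover have "b \<noteq> 1" using h by (auto simp: epow_def split: enat.splits)
    moreover have "alpha (Suc m) S b \<noteq> 0" using h by (auto simp: epow_def zero_enat_def)
    ultimately show "b \<in> {b. 2 \<le> b \<and> alpha (Suc m) S b \<noteq> 0}" by auto
  qed
  then have finn: "finite Fn" using fin_F[OF assms(1) c2] finite_subset by blast
  have sub: "Fm \<subseteq> Fn"
  proof
    fix b assume "b \<in> Fm"
    then have "b \<in> T" "e m b \<noteq> 1" unfolding Fm_def by auto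
    moreover have "e (Suc m) b \<noteq> 1"
    proof
      assume "e (Suc m) b = 1"
      then have "e m b dvd 1" using dv[of b] by simp
      then show False using \<open>e m b \<noteq> 1\<close> by simp
    qed
    ultimately show "b \<in> Fn" unfolding Fn_def by auto
  qed
  then have finm: "finite Fm" using finn finite_subset by blast
  have gm: "genfact m S T = prod (e m) Fm"
    unfolding genfact_def Let_def using finm unfolding Fm_def e_def by simp
  also have "\<dots> = prod (e m) Fn"
    by (rule prod.mono_neutral_left[OF finn sub]) (auto simp: Fm_def Fn_def)
  finally have gm: "genfact m S T = prod (e m) Fn" .
  have gn: "genfact (Suc m) S T = prod (e (Suc m)) Fn"
    unfolding genfact_def Let_def using finn unfolding Fn_def e_def by simp
  have A: "genfact m S T > 0" unfolding gm using pm by (intro prod_pos) auto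
  have B: "genfact (Suc m) S T > 0" unfolding gn using pn by (intro prod_pos) auto
  have C: "genfact m S T dvd genfact (Suc m) S T" unfolding gm gn using dv by (intro prod_dvd_prod)
  have D: "genfact (Suc m) S T div genfact m S T > 0"
    using A B C by (metis dvd_div_mult_self mult_is_0 neq0_conv)
  show ?thesis using A C D unfolding m_def[symmetric] n by simp
qed

end
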